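(* Let $m\ge1$ be an integer, let $\tilde H\in\Omega_{2n}$ be invertible and Hermitian, and let $\tilde B\in\Omega_{2n}$ be $\tilde H$-selfadjoint with $\sigma(\tilde B)\subset(0,\infty)$. Then there exists an $\tilde H$-selfadjoint $\tilde A\in\Omega_{2n}$ such that $\tilde A^m=\tilde B$.
   Context: $\Omega_{2n}=\{\begin{bmatrix}A_1&\bar A_2\\-A_2&\bar A_1\end{bmatrix}: A_1,A_2\in\mathbb{C}^{n\times n}\}\subset\mathbb{C}^{2n\times 2n}$. For an invertible Hermitian $H$, $A$ is $H$-selfadjoint if $HA=A^*H$. $\sigma(\cdot)$ denotes the spectrum. *)

theory Defs
  imports "Jordan_Normal_Form.Schur_Decomposition"
begin

definition Omega :: "nat \<Rightarrow> complex mat set" where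
  "Omega n = {four_block_mat A1 (map_mat cnj A2) (- A2) (map_mat cnj A1) | A1 A2.
                A1 \<in> carrier_mat n n \<and> A2 \<in> carrier_mat n n}"

definition hermitian_mat :: "complex mat \<Rightarrow> bool" where
  "hermitian_mat H \<longleftrightarrow> H \<in> carrier_mat (dim_row H) (dim_row H) \<and> mat_adjoint H = H"

definition H_selfadjoint :: "complex mat \<Rightarrow> complex mat \<Rightarrow> bool" where
  "H_selfadjoint H A \<longleftrightarrow> H * A = mat_adjoint A * H"

definition spectrum_mat :: "complex mat \<Rightarrow> complex set" where
  "spectrum_mat A = {k. eigenvalue A k}"

end

theory Submission
  imports Defs "HOL-Computational_Algebra.Field_as_Ring"
begin

lemma binom2_ex:
  fixes p e :: "'a :: comm_ring_1"
  shows "\<exists>s. (p + e) ^ Suc m = p ^ Suc m + of_nat (Suc m) * p ^ m * e + e^2 * s"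
proof (induction m)
  case 0
  show ?case by (rule exI[of _ 0]) simp
next
  case (Suc m)
  then obtain s where s: "(p + e) ^ Suc m = p ^ Suc m + of_nat (Suc m) * p ^ m * e + e^2 * s" by blast
  have "(p + e) ^ Suc (Suc m) = (p + e) * (p + e) ^ Suc m" by simp
  also have "\<dots> = p ^ Suc (Suc m) + of_nat (Suc (Suc m)) * p ^ Suc m * e
      + e^2 * (p * s + of_nat (Suc m) * p ^ m + e * s)"
    unfolding s by (simp add: algebra_simps power2_eq_square)
  finally show ?case by blast
qed

lemma pow_diff_dvd:
  fixes a b :: "'a :: comm_ring_1"
  shows "a - b dvd a ^ k - b ^ k"
proof (induction k)
  case 0 then show ?case by simp
next
  case (Suc k)
  have "a ^ Suc k - b ^ Suc k = a * (a ^ k - b ^ k) + (a - b) * b ^ k"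
    by (simp add: algebra_simps)
  with Suc show ?case by (metis dvd_add dvd_mult dvd_mult2 dvd_refl)
qed

lemma ring_aux:
  fixes P x a r t c s Q :: "'a :: comm_ring_1"
  assumes "P - x = a * r" "Q = P + t * (c * a) + (c * a)^2 * s"
  shows "Q - x = a * (r + t * c + c^2 * a * s)"
proof -
  have "Q - x = (P - x) + t * (c * a) + (c * a)^2 * s" using assms(2) by (simp add: algebra_simps)
  also have "... = a * (r + t * c + c^2 * a * s)" unfolding assms(1) by (simp add: algebra_simps power2_eq_square)
  finally show ?thesis .
qed

lemma hensel_local:
  fixes d :: real
  assumes d: "d > 0" and m: "m \<ge> 1"
  shows "\<exists>p. [:-d,1:] ^ Suc k dvd p ^ m - [:0,1:] \<and> poly p d = root m d"
proof (induction k)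
  case 0
  have "[:root m d:] ^ m = [:d:]"
    using d m by (simp add: poly_const_pow)
  then have "[:root m d:] ^ m - [:0,1:] = - [:-d,1:]" by simp
  then have "[:-d,1:] ^ Suc 0 dvd [:root m d:] ^ m - [:0,1:]" by (simp only: power_one_right power_Suc0_right dvd_minus_iff dvd_refl)
  moreover have "poly [:root m d:] d = root m d" by simp
  ultimately show ?case by blast
next
  case (Suc k)
  then obtain p where p: "[:-d,1:] ^ Suc k dvd p ^ m - [:0,1:]" and pd: "poly p d = root m d" by blast
  obtain r where r: "p ^ m - [:0,1:] = [:-d,1:] ^ Suc k * r" using p by (auto elim: dvdE)
  obtain m' where m': "m = Suc m'" using m by (cases m) auto
  define c where "c = - poly r d / (of_nat m * (root m d) ^ m')"
  have rpos: "root m d > 0" using d m by simp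
  define a where "a = [:-d,1:] ^ Suc k"
  define e where "e = [:c:] * a"
  obtain s where s: "(p + e) ^ m = p ^ m + of_nat m * p ^ m' * e + e^2 * s"
    using binom2_ex[of p e m'] m' by auto
  have eq: "(p + e) ^ m - [:0,1:] = a * (r + of_nat m * p ^ m' * [:c:] + [:c:]^2 * a * s)"
    unfolding e_def by (rule ring_aux[OF r[folded a_def] s[unfolded e_def]])
  have "poly (r + of_nat m * p ^ m' * [:c:]) d = poly r d + of_nat m * (root m d) ^ m' * c"
    by (simp add: pd of_nat_poly)
  also have "\<dots> = 0" using rpos m unfolding c_def by (simp add: field_simps)
  finally have "[:-d,1:] dvd r + of_nat m * p ^ m' * [:c:]" using poly_eq_0_iff_dvd by blast
  moreover have "[:-d,1:] dvd [:c:]^2 * a * s" unfolding a_def power_Suc by (rule dvd_mult2, rule dvd_mult, rule dvd_mult2, rule dvd_refl)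
  ultimately have "[:-d,1:] dvd r + of_nat m * p ^ m' * [:c:] + [:c:]^2 * a * s" by (rule dvd_add)
  then have "a * [:-d,1:] dvd (p + e) ^ m - [:0,1:]" unfolding eq by (rule mult_dvd_mono[OF dvd_refl])
  then have "[:-d,1:] ^ Suc (Suc k) dvd (p + e) ^ m - [:0,1:]" unfolding a_def by (simp add: mult.commute)
  moreover have "poly (p + e) d = root m d" using pd by (simp add: e_def a_def)
  ultimately show ?case by blast
qed

lemma coprime_linear:
  fixes q :: "real poly"
  assumes "poly q d \<noteq> 0"
  shows "coprime [:-d,1:] q"
proof -
  have "irreducible [:-d,1:]" by (rule irreducible_linear_field_poly) simp
  then have "prime_elem [:-d,1:]" by (rule irreducible_imp_prime_elem)
  moreover have "\<not> [:-d,1:] dvd q" using assms by (simp add: poly_eq_0_iff_dvd)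
  ultimately show ?thesis by (rule prime_elem_imp_coprime)
qed

lemma prod_split: "(\<Prod>x\<leftarrow>xs. f x) = f d ^ length (filter ((=) d) xs) * (\<Prod>x\<leftarrow>filter ((\<noteq>) d) xs. f x)"
  for f :: "'b \<Rightarrow> 'a :: comm_monoid_mult"
  by (induction xs) (auto simp: algebra_simps)

lemma diff_chain: "(x - y) + (y - z) = x - (z::'a::ab_group_add)" by simp

lemma crt_root:
  fixes a b p q :: "real poly"
  assumes ab: "coprime a b" and pa: "a dvd p ^ m - [:0,1:]" and qb: "b dvd q ^ m - [:0,1:]"
  shows "\<exists>r. a * b dvd r ^ m - [:0,1:]"
proof -
  obtain u v where uv: "u * a + v * b = 1"
    using bezout_coefficients_fst_snd[of a b] coprime_imp_gcd_eq_1[OF ab] by metis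
  define r where "r = p * v * b + q * u * a"
  have "r - p = r - p * (u * a + v * b)" using uv by simp
  also have "\<dots> = a * (u * (q - p))" unfolding r_def by (simp add: algebra_simps)
  finally have "r - p = a * (u * (q - p))" .
  then have 1: "a dvd r - p" by simp
  have "r - q = r - q * (u * a + v * b)" using uv by simp
  also have "\<dots> = b * (v * (p - q))" unfolding r_def by (simp add: algebra_simps)
  finally have "r - q = b * (v * (p - q))" .
  then have 2: "b dvd r - q" by simp
  have "a dvd r ^ m - p ^ m" using 1 pow_diff_dvd dvd_trans by blast
  then have "a dvd (r ^ m - p ^ m) + (p ^ m - [:0,1:])" using pa by (rule dvd_add)
  then have A: "a dvd r ^ m - [:0,1:]" by (simp only: diff_chain)
  have "b dvd r ^ m - q ^ m" using 2 pow_diff_dvd dvd_trans by blast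
  then have "b dvd (r ^ m - q ^ m) + (q ^ m - [:0,1:])" using qb by (rule dvd_add)
  then have B: "b dvd r ^ m - [:0,1:]" by (simp only: diff_chain)
  show ?thesis using divides_mult[OF A B ab] by blast
qed

lemma real_root_poly:
  fixes ds :: "real list"
  assumes "\<forall>d\<in>set ds. d > 0" and m: "m \<ge> 1"
  shows "\<exists>p. (\<Prod>d\<leftarrow>ds. [:-d,1:]) dvd p ^ m - [:0,1:]"
  using assms(1)
proof (induction "length ds" arbitrary: ds rule: less_induct)
  case less
  show ?case
  proof (cases ds)
    case Nil
    then show ?thesis by simp
  next
    case (Cons d ds0)
    define k where "k = length (filter ((=) d) ds)"
    define ds' where "ds' = filter ((\<noteq>) d) ds"
    have k: "k = Suc (k - 1)" unfolding k_def Cons by simp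
    have len: "length ds' < length ds" unfolding ds'_def Cons
      by (simp add: le_imp_less_Suc)
    have pos: "\<forall>d\<in>set ds'. d > 0" using less.prems unfolding ds'_def by auto
    obtain q where q: "(\<Prod>d\<leftarrow>ds'. [:-d,1:]) dvd q ^ m - [:0,1:]"
      using less.hyps[OF len pos] by blast
    have dpos: "d > 0" using less.prems Cons by auto
    obtain p where p: "[:-d,1:] ^ Suc (k - 1) dvd p ^ m - [:0,1:]"
      using hensel_local[OF dpos m] by blast
    have "poly (\<Prod>d\<leftarrow>ds'. [:-d,1:]) d \<noteq> 0"
      unfolding poly_prod_list ds'_def by (induction ds) auto
    then have "coprime [:-d,1:] (\<Prod>d\<leftarrow>ds'. [:-d,1:])" by (rule coprime_linear)
    then have cop: "coprime ([:-d,1:] ^ k) (\<Prod>d\<leftarrow>ds'. [:-d,1:])" by simp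
    have "(\<Prod>d\<leftarrow>ds. [:-d,1:]) = [:-d,1:] ^ k * (\<Prod>d\<leftarrow>ds'. [:-d,1:])"
      unfolding k_def ds'_def by (rule prod_split)
    with crt_root[OF cop p[folded k] q] show ?thesis by simp
  qed
qed


definition meval :: "nat \<Rightarrow> 'a::comm_ring_1 poly \<Rightarrow> 'a mat \<Rightarrow> 'a mat" where
  "meval n p A = foldr (\<lambda>c M. c \<cdot>\<^sub>m 1\<^sub>m n + A * M) (coeffs p) (0\<^sub>m n n)"

lemma zero_smult_mat[simp]: "(0::'a::semiring_1) \<cdot>\<^sub>m A = 0\<^sub>m (dim_row A) (dim_col A)"
  by (rule eq_matI) auto

lemma smult_smult_mat: "a \<cdot>\<^sub>m (b \<cdot>\<^sub>m A) = (a * b) \<cdot>\<^sub>m (A :: 'a::semigroup_mult mat)"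
  by (rule eq_matI) (auto simp: mult.assoc)

lemma meval_0[simp]: "meval n 0 A = 0\<^sub>m n n"
  unfolding meval_def by simp

lemma meval_pCons:
  assumes A: "A \<in> carrier_mat n n"
  shows "meval n (pCons a p) A = a \<cdot>\<^sub>m 1\<^sub>m n + A * meval n p A"
proof (cases "p = 0 \<and> a = 0")
  case True
  then show ?thesis using A by (simp add: meval_def)
next
  case False
  then have "coeffs (pCons a p) = a # coeffs p"
    by (auto simp: coeffs_pCons_eq_cCons cCons_def)
  then show ?thesis unfolding meval_def by simp
qed

lemma meval_carrier[simp]:
  assumes A: "A \<in> carrier_mat n n"
  shows "meval n p A \<in> carrier_mat n n"
proof (induction p rule: pCons_induct)
  case 0 then show ?case by simp
next
  case (pCons a p)
  show ?case unfolding meval_pCons[OF A]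
    by (rule add_carrier_mat, rule mult_carrier_mat[OF A pCons(2)])
qed

lemma meval_dim[simp]:
  "A \<in> carrier_mat n n \<Longrightarrow> dim_row (meval n p A) = n"
  "A \<in> carrier_mat n n \<Longrightarrow> dim_col (meval n p A) = n"
  using carrier_matD[OF meval_carrier] by auto

lemma lin1: "X \<in> carrier_mat n n \<Longrightarrow> Y \<in> carrier_mat n n \<Longrightarrow>
  (a + b) \<cdot>\<^sub>m 1\<^sub>m n + (X + Y) = (a \<cdot>\<^sub>m 1\<^sub>m n + X) + (b \<cdot>\<^sub>m 1\<^sub>m n + (Y :: 'a::comm_ring_1 mat))"
  by (rule eq_matI) (auto simp: distrib_right add.assoc add.left_commute)

lemma lin2: "X \<in> carrier_mat n n \<Longrightarrow>
  (c * a) \<cdot>\<^sub>m 1\<^sub>m n + c \<cdot>\<^sub>m X = c \<cdot>\<^sub>m (a \<cdot>\<^sub>m 1\<^sub>m n + (X :: 'a::comm_ring_1 mat))"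
  by (rule eq_matI) (auto simp: distrib_left mult.assoc)

lemma meval_add:
  assumes A: "A \<in> carrier_mat n n"
  shows "meval n (p + q) A = meval n p A + meval n q A"
proof (induction p arbitrary: q rule: pCons_induct)
  case 0 then show ?case using A by simp
next
  case (pCons a p)
  obtain b q' where q: "q = pCons b q'" by (cases q) auto
  have c1: "meval n p A \<in> carrier_mat n n" "meval n q' A \<in> carrier_mat n n" using A by auto
  have "meval n (pCons a p + q) A = (a + b) \<cdot>\<^sub>m 1\<^sub>m n + (A * meval n p A + A * meval n q' A)"
    unfolding q by (simp add: meval_pCons[OF A] pCons(2) mult_add_distrib_mat[OF A c1])
  also have "\<dots> = (a \<cdot>\<^sub>m 1\<^sub>m n + A * meval n p A) + (b \<cdot>\<^sub>m 1\<^sub>m n + A * meval n q' A)"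
    using A c1 by (intro lin1) auto
  finally show ?case unfolding q by (simp add: meval_pCons[OF A])
qed

lemma meval_smult:
  assumes A: "A \<in> carrier_mat n n"
  shows "meval n (smult c p) A = c \<cdot>\<^sub>m meval n p A"
proof (induction p rule: pCons_induct)
  case 0 then show ?case using A by simp
next
  case (pCons a p)
  have c1: "meval n p A \<in> carrier_mat n n" using A by auto
  have "meval n (smult c (pCons a p)) A = (c * a) \<cdot>\<^sub>m 1\<^sub>m n + c \<cdot>\<^sub>m (A * meval n p A)"
    by (simp add: meval_pCons[OF A] pCons(2) mult_smult_distrib[OF A c1])
  also have "\<dots> = c \<cdot>\<^sub>m meval n (pCons a p) A"
    using A c1 by (simp add: meval_pCons[OF A] lin2)
  finally show ?case .
qed

lemma one_smult_mat[simp]: "(1::'a::monoid_mult) \<cdot>\<^sub>m A = A"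
  by (rule eq_matI) auto

lemma meval_const:
  assumes A: "A \<in> carrier_mat n n"
  shows "meval n [:c:] A = c \<cdot>\<^sub>m 1\<^sub>m n"
  unfolding meval_pCons[OF A] meval_0 right_mult_zero_mat[OF A] 
  by (rule right_add_zero_mat) simp

lemma meval_one:
  assumes A: "A \<in> carrier_mat n n"
  shows "meval n 1 A = 1\<^sub>m n"
  using meval_const[OF A, of 1] by (simp add: one_pCons)

lemma meval_X:
  assumes A: "A \<in> carrier_mat n n"
  shows "meval n [:0,1:] A = A"
proof -
  have "meval n [:0,1:] A = 0 \<cdot>\<^sub>m 1\<^sub>m n + A * meval n [:1:] A"
    by (rule meval_pCons[OF A])
  also have "meval n [:1:] A = 1\<^sub>m n" using meval_const[OF A, of 1] by simp
  also have "0 \<cdot>\<^sub>m 1\<^sub>m n + A * 1\<^sub>m n = A" using A by simp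
  finally show ?thesis .
qed

lemma lin3:
  assumes A: "A \<in> carrier_mat n n" and X: "X \<in> carrier_mat n n" and Y: "Y \<in> carrier_mat n n"
  shows "a \<cdot>\<^sub>m Y + (0 \<cdot>\<^sub>m 1\<^sub>m n + A * (X * Y)) = (a \<cdot>\<^sub>m 1\<^sub>m n + A * X) * (Y :: 'a :: comm_ring_1 mat)"
proof -
  have "(a \<cdot>\<^sub>m 1\<^sub>m n + A * X) * Y = (a \<cdot>\<^sub>m 1\<^sub>m n) * Y + (A * X) * Y"
    by (rule add_mult_distrib_mat[of _ n n], insert A X Y, auto)
  also have "\<dots> = a \<cdot>\<^sub>m Y + A * (X * Y)"
    using A X Y by (simp add: mult_smult_assoc_mat[of _ n n _ n])
  finally show ?thesis using A X Y by simp
qed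

lemma meval_mult:
  assumes A: "A \<in> carrier_mat n n"
  shows "meval n (p * q) A = meval n p A * meval n q A"
proof (induction p rule: pCons_induct)
  case 0 then show ?case using A by simp
next
  case (pCons a p)
  have c: "meval n p A \<in> carrier_mat n n" "meval n q A \<in> carrier_mat n n" using A by auto
  have "meval n (pCons a p * q) A = meval n (smult a q + pCons 0 (p * q)) A" by simp
  also have "\<dots> = a \<cdot>\<^sub>m meval n q A + (0 \<cdot>\<^sub>m 1\<^sub>m n + A * (meval n p A * meval n q A))"
    unfolding meval_add[OF A] meval_smult[OF A] meval_pCons[OF A] pCons(2) ..
  also have "\<dots> = (a \<cdot>\<^sub>m 1\<^sub>m n + A * meval n p A) * meval n q A"
    by (rule lin3[OF A c])
  finally show ?case unfolding meval_pCons[OF A] .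
qed

lemma meval_power:
  assumes A: "A \<in> carrier_mat n n"
  shows "meval n (p ^ k) A = meval n p A ^\<^sub>m k"
proof (induction k)
  case 0 then show ?case using A by (simp add: meval_one)
next
  case (Suc k)
  show ?case unfolding power_Suc2 meval_mult[OF A] Suc by simp
qed

lemma meval_intertwine:
  assumes J: "J \<in> carrier_mat n n" and Y: "Y \<in> carrier_mat n n" and Z: "Z \<in> carrier_mat n n"
    and JYZ: "J * Y = Z * J"
  shows "J * meval n p Y = meval n p Z * J"
proof (induction p rule: pCons_induct)
  case 0 then show ?case using J by simp
next
  case (pCons a p)
  have c: "meval n p Y \<in> carrier_mat n n" "meval n p Z \<in> carrier_mat n n" using Y Z by auto
  have e1: "J * meval n (pCons a p) Y = J * (a \<cdot>\<^sub>m 1\<^sub>m n) + J * (Y * meval n p Y)"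
    unfolding meval_pCons[OF Y] by (rule mult_add_distrib_mat[OF J], insert Y c, auto)
  have "J * (Y * meval n p Y) = (J * Y) * meval n p Y" by (rule assoc_mult_mat[symmetric, OF J Y c(1)])
  also have "\<dots> = (Z * J) * meval n p Y" unfolding JYZ ..
  also have "\<dots> = Z * (J * meval n p Y)" by (rule assoc_mult_mat[OF Z J c(1)])
  also have "\<dots> = Z * (meval n p Z * J)" unfolding pCons(2) ..
  also have "\<dots> = (Z * meval n p Z) * J" by (rule assoc_mult_mat[symmetric, OF Z c(2) J])
  finally have e2: "J * (Y * meval n p Y) = (Z * meval n p Z) * J" .
  have e3: "J * (a \<cdot>\<^sub>m 1\<^sub>m n) = (a \<cdot>\<^sub>m 1\<^sub>m n) * J"
    using J by (simp add: mult_smult_distrib[OF J one_carrier_mat] mult_smult_assoc_mat[OF one_carrier_mat J])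
  have e4: "(a \<cdot>\<^sub>m 1\<^sub>m n) * J + (Z * meval n p Z) * J = (a \<cdot>\<^sub>m 1\<^sub>m n + Z * meval n p Z) * J"
    by (rule add_mult_distrib_mat[symmetric], insert J Z c, auto)
  have "J * meval n (pCons a p) Y = (a \<cdot>\<^sub>m 1\<^sub>m n + Z * meval n p Z) * J"
    unfolding e1 e2 e3 e4 ..
  then show ?case unfolding meval_pCons[OF Z] .
qed

lemma meval_commute:
  assumes A: "A \<in> carrier_mat n n"
  shows "A * meval n p A = meval n p A * A"
  by (rule meval_intertwine[OF A A A refl])

lemma cnj_mult_mat:
  assumes "A \<in> carrier_mat nr n" "B \<in> carrier_mat n nc"
  shows "map_mat cnj (A * B) = map_mat cnj A * map_mat (cnj :: complex \<Rightarrow> complex) B"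
  by (rule eq_matI) (use assms in \<open>auto simp: scalar_prod_def\<close>)

lemma meval_cnj:
  fixes A :: "complex mat"
  assumes A: "A \<in> carrier_mat n n"
  shows "(\<forall>i. cnj (coeff p i) = coeff p i) \<longrightarrow> map_mat cnj (meval n p A) = meval n p (map_mat cnj A)"
proof (induction p rule: pCons_induct)
  case 0 then show ?case by (auto intro: eq_matI)
next
  case (pCons a p)
  show ?case
  proof
    assume h: "\<forall>i. cnj (coeff (pCons a p) i) = coeff (pCons a p) i"
    then have ha: "cnj a = a" using spec[OF h, of 0] by simp
    have hp: "\<forall>i. cnj (coeff p i) = coeff p i" using h by (metis coeff_pCons_Suc)
    have cA: "map_mat cnj A \<in> carrier_mat n n" using A by simp
    have c: "meval n p A \<in> carrier_mat n n" using A by simp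
    have "map_mat cnj (meval n (pCons a p) A) = map_mat cnj (a \<cdot>\<^sub>m 1\<^sub>m n) + map_mat cnj (A * meval n p A)"
      unfolding meval_pCons[OF A] by (rule eq_matI) (use A c in auto)
    also have "map_mat cnj (a \<cdot>\<^sub>m 1\<^sub>m n) = a \<cdot>\<^sub>m 1\<^sub>m n" using ha by (intro eq_matI) auto
    also have "map_mat cnj (A * meval n p A) = map_mat cnj A * map_mat cnj (meval n p A)"
      by (rule cnj_mult_mat[OF A c])
    also have "map_mat cnj (meval n p A) = meval n p (map_mat cnj A)" using pCons(2) hp by blast
    finally show "map_mat cnj (meval n (pCons a p) A) = meval n (pCons a p) (map_mat cnj A)"
      unfolding meval_pCons[OF cA] .
  qed
qed

lemma transpose_smult_one: "transpose_mat (a \<cdot>\<^sub>m 1\<^sub>m n) = a \<cdot>\<^sub>m 1\<^sub>m n"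
  by (rule eq_matI) auto

lemma meval_transpose:
  assumes A: "A \<in> carrier_mat n n"
  shows "transpose_mat (meval n p A) = meval n p (transpose_mat A)"
proof (induction p rule: pCons_induct)
  case 0 then show ?case by (auto intro: eq_matI)
next
  case (pCons a p)
  have tA: "transpose_mat A \<in> carrier_mat n n" using A by simp
  have c: "meval n p A \<in> carrier_mat n n" using A by simp
  have "transpose_mat (meval n (pCons a p) A) = transpose_mat (a \<cdot>\<^sub>m 1\<^sub>m n) + transpose_mat (A * meval n p A)"
    unfolding meval_pCons[OF A] by (rule transpose_add) (use A c in auto)
  also have "transpose_mat (A * meval n p A) = transpose_mat (meval n p A) * transpose_mat A"
    by (rule transpose_mult[OF A c])
  also have "\<dots> = meval n p (transpose_mat A) * transpose_mat A" unfolding pCons(2) ..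
  also have "\<dots> = transpose_mat A * meval n p (transpose_mat A)" by (rule meval_commute[OF tA, symmetric])
  finally show ?case unfolding meval_pCons[OF tA] transpose_smult_one .
qed

lemma adjoint_transpose:
  fixes A :: "complex mat"
  assumes A: "A \<in> carrier_mat n n"
  shows "mat_adjoint A = transpose_mat (map_mat cnj A)"
  unfolding mat_adjoint_def by (rule eq_matI) (use A in \<open>auto simp: mat_of_rows_index\<close>)

lemma tri_annih_aux:
  fixes T :: "'a :: comm_ring_1 mat"
  assumes T: "T \<in> carrier_mat n n" and ut: "upper_triangular T"
  shows "k \<le> n \<Longrightarrow> i < n \<Longrightarrow> j < k \<Longrightarrow>
     meval n (\<Prod>e\<leftarrow>take k (diag_mat T). [:-e,1:]) T $$ (i,j) = 0"
proof (induction k arbitrary: i j)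
  case 0 then show ?case by simp
next
  case (Suc k)
  define ds where "ds = diag_mat T"
  have lds: "length ds = n" using T unfolding ds_def diag_mat_def by simp
  have tk: "take (Suc k) ds = take k ds @ [ds ! k]" using Suc(2) lds by (simp add: take_Suc_conv_app_nth)
  have dk: "ds ! k = T $$ (k,k)" using Suc(2) T unfolding ds_def diag_mat_def by simp
  define M where "M = meval n (\<Prod>e\<leftarrow>take k ds. [:-e,1:]) T"
  define N where "N = meval n [:-(ds ! k),1:] T"
  have M: "M \<in> carrier_mat n n" unfolding M_def using T by simp
  have N: "N \<in> carrier_mat n n" unfolding N_def using T by simp
  have Nij: "l < n \<Longrightarrow> j < n \<Longrightarrow> N $$ (l,j) = T $$ (l,j) - (if l = j then ds ! k else 0)" for l j
  proof -
    assume l: "l < n" and j: "j < n"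
    have "N = (-(ds ! k)) \<cdot>\<^sub>m 1\<^sub>m n + T * meval n [:1:] T" unfolding N_def by (rule meval_pCons[OF T])
    also have "meval n [:1:] T = 1\<^sub>m n" using meval_const[OF T, of 1] by simp
    finally have "N = (-(ds ! k)) \<cdot>\<^sub>m 1\<^sub>m n + T" using T by simp
    then show ?thesis using l j T by auto
  qed
  have Mz: "l < k \<Longrightarrow> M $$ (i,l) = 0" for l
    unfolding M_def ds_def using Suc.IH[of i l] Suc.prems by simp
  have prod: "meval n (\<Prod>e\<leftarrow>take (Suc k) ds. [:-e,1:]) T = M * N"
  proof -
    have "(\<Prod>e\<leftarrow>take k ds @ [ds ! k]. [:-e,1:]) = (\<Prod>e\<leftarrow>take k ds. [:-e,1:]) * [:-(ds ! k),1:]"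
      by simp
    then show ?thesis unfolding tk M_def N_def by (simp only: meval_mult[OF T])
  qed
  have "(M * N) $$ (i,j) = (\<Sum>l\<in>{0..<n}. M $$ (i,l) * N $$ (l,j))"
    using M N Suc.prems by (simp add: scalar_prod_def)
  also have "\<dots> = 0"
  proof (rule sum.neutral, rule ballI)
    fix l assume l: "l \<in> {0..<n}"
    show "M $$ (i,l) * N $$ (l,j) = 0"
    proof (cases "l < k")
      case True then show ?thesis using Mz by simp
    next
      case False
      have j: "j < n" using Suc.prems by simp
      show ?thesis
      proof (cases "l = j")
        case True
        then have "l = k" using False Suc.prems by simp
        then show ?thesis using Nij[of l j] l j True dk by simp
      next
        case lj: False
        then have "l > j" using False Suc.prems by simp
        then have "T $$ (l,j) = 0" using ut T l unfolding upper_triangular_def by auto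
        then show ?thesis using Nij[of l j] l j lj by simp
      qed
    qed
  qed
  finally show ?case using prod unfolding ds_def by simp
qed

lemma tri_annih:
  fixes T :: "'a :: comm_ring_1 mat"
  assumes T: "T \<in> carrier_mat n n" and ut: "upper_triangular T"
  shows "meval n (\<Prod>e\<leftarrow>diag_mat T. [:-e,1:]) T = 0\<^sub>m n n"
proof -
  have l: "length (diag_mat T) = n" using T unfolding diag_mat_def by simp
  show ?thesis
  proof (rule eq_matI)
    fix i j assume "i < dim_row (0\<^sub>m n n :: 'a mat)" "j < dim_col (0\<^sub>m n n :: 'a mat)"
    then show "meval n (\<Prod>e\<leftarrow>diag_mat T. [:-e,1:]) T $$ (i,j) = 0\<^sub>m n n $$ (i,j)"
      using tri_annih_aux[OF T ut, of n i j] l by simp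
  qed (use T in auto)
qed


definition Kmat :: "nat \<Rightarrow> complex mat" where
  "Kmat n = four_block_mat (0\<^sub>m n n) (1\<^sub>m n) (- 1\<^sub>m n) (0\<^sub>m n n)"

lemma Kmat_carrier: "Kmat n \<in> carrier_mat (n+n) (n+n)"
  unfolding Kmat_def by (rule four_block_carrier_mat) auto

lemma fb_inj:
  assumes c: "A \<in> carrier_mat n n" "B \<in> carrier_mat n n" "C \<in> carrier_mat n n" "D \<in> carrier_mat n n"
    "A' \<in> carrier_mat n n" "B' \<in> carrier_mat n n" "C' \<in> carrier_mat n n" "D' \<in> carrier_mat n n"
    and eq: "four_block_mat A B C D = four_block_mat A' B' C' D'"
  shows "A = A' \<and> B = B' \<and> C = C' \<and> (D :: 'a mat) = D'"
proof -
  have e: "four_block_mat A B C D $$ (i,j) = four_block_mat A' B' C' D' $$ (i,j)" for i j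
    using eq by simp
  have "A = A'"
  proof (rule eq_matI)
    fix i j assume "i < dim_row A'" "j < dim_col A'"
    then show "A $$ (i,j) = A' $$ (i,j)" using e[of i j] c by simp
  qed (use c in auto)
  moreover have "B = B'"
  proof (rule eq_matI)
    fix i j assume "i < dim_row B'" "j < dim_col B'"
    then show "B $$ (i,j) = B' $$ (i,j)" using e[of i "j+n"] c by simp
  qed (use c in auto)
  moreover have "C = C'"
  proof (rule eq_matI)
    fix i j assume "i < dim_row C'" "j < dim_col C'"
    then show "C $$ (i,j) = C' $$ (i,j)" using e[of "i+n" j] c by simp
  qed (use c in auto)
  moreover have "D = D'"
  proof (rule eq_matI)
    fix i j assume "i < dim_row D'" "j < dim_col D'"
    then show "D $$ (i,j) = D' $$ (i,j)" using e[of "i+n" "j+n"] c by simp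
  qed (use c in auto)
  ultimately show ?thesis by blast
qed

lemma K_left:
  assumes c: "P \<in> carrier_mat n n" "Q \<in> carrier_mat n n" "R \<in> carrier_mat n n" "S \<in> carrier_mat n n"
  shows "Kmat n * four_block_mat P Q R S = four_block_mat R S (- P) (- Q)"
  unfolding Kmat_def
  by (subst mult_four_block_mat[OF zero_carrier_mat one_carrier_mat uminus_carrier_mat[OF one_carrier_mat] zero_carrier_mat c], insert c, auto)

lemma K_right:
  assumes c: "P \<in> carrier_mat n n" "Q \<in> carrier_mat n n" "R \<in> carrier_mat n n" "S \<in> carrier_mat n n"
  shows "four_block_mat P Q R S * Kmat n = four_block_mat (- Q) P (- S) R"
  unfolding Kmat_def
  by (subst mult_four_block_mat[OF c zero_carrier_mat one_carrier_mat uminus_carrier_mat[OF one_carrier_mat] zero_carrier_mat], insert c, auto)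

lemma cc_mat[simp]: "map_mat cnj (map_mat cnj A) = (A :: complex mat)"
  by (rule eq_matI) auto

lemma c_uminus_mat: "map_mat cnj (- A) = - map_mat cnj (A :: complex mat)"
  by (rule eq_matI) auto

lemma Omega_K:
  assumes "X \<in> Omega n"
  shows "X \<in> carrier_mat (n+n) (n+n) \<and> Kmat n * map_mat cnj X = X * Kmat n"
proof -
  obtain A1 A2 where X: "X = four_block_mat A1 (map_mat cnj A2) (- A2) (map_mat cnj A1)"
    and c: "A1 \<in> carrier_mat n n" "A2 \<in> carrier_mat n n"
    using assms unfolding Omega_def by blast
  have cc: "map_mat cnj A1 \<in> carrier_mat n n" "map_mat cnj A2 \<in> carrier_mat n n"
    "- A2 \<in> carrier_mat n n" "- map_mat cnj A1 \<in> carrier_mat n n" "- map_mat cnj A2 \<in> carrier_mat n n"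
    using c by auto
  have cX: "map_mat cnj X = four_block_mat (map_mat cnj A1) A2 (- map_mat cnj A2) A1"
    unfolding X by (subst map_four_block_mat[OF c(1) cc(2) cc(3) cc(1)]) (simp add: c_uminus_mat)
  have "Kmat n * map_mat cnj X = four_block_mat (- map_mat cnj A2) A1 (- map_mat cnj A1) (- A2)"
    unfolding cX by (subst K_left[OF cc(1) c(2) cc(5) c(1)]) simp
  moreover have "X * Kmat n = four_block_mat (- map_mat cnj A2) A1 (- map_mat cnj A1) (- A2)"
    unfolding X by (rule K_right[OF c(1) cc(2) cc(3) cc(1)])
  moreover have "X \<in> carrier_mat (n+n) (n+n)" unfolding X using c cc by simp
  ultimately show ?thesis by simp
qed

lemma K_Omega:
  assumes Xc: "X \<in> carrier_mat (n+n) (n+n)" and eq: "Kmat n * map_mat cnj X = X * Kmat n"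
  shows "X \<in> Omega n"
proof -
  obtain P Q R S where sb: "split_block X n n = (P,Q,R,S)" by (cases "split_block X n n") auto
  note spl = split_block[OF sb, of n n]
  have c: "P \<in> carrier_mat n n" "Q \<in> carrier_mat n n" "R \<in> carrier_mat n n" "S \<in> carrier_mat n n"
    and X: "X = four_block_mat P Q R S" using spl Xc by auto
  have cc: "map_mat cnj P \<in> carrier_mat n n" "map_mat cnj Q \<in> carrier_mat n n"
    "map_mat cnj R \<in> carrier_mat n n" "map_mat cnj S \<in> carrier_mat n n" using c by auto
  have cX: "map_mat cnj X = four_block_mat (map_mat cnj P) (map_mat cnj Q) (map_mat cnj R) (map_mat cnj S)"
    unfolding X by (rule map_four_block_mat[OF c])
  have "four_block_mat (map_mat cnj R) (map_mat cnj S) (- map_mat cnj P) (- map_mat cnj Q)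
      = four_block_mat (- Q) P (- S) R"
    using eq unfolding cX K_left[OF cc] unfolding X K_right[OF c] .
  from fb_inj[OF cc(3,4) _ _ _ c(1) _ c(3) this] c cc
  have e: "map_mat cnj R = - Q" "map_mat cnj S = P" "- map_mat cnj P = - S" by auto
  have "X = four_block_mat P (map_mat cnj (- R)) (- (- R)) (map_mat cnj P)"
    unfolding X c_uminus_mat e using e(3) by simp
  moreover have "- R \<in> carrier_mat n n" using c by simp
  ultimately show ?thesis unfolding Omega_def using c by blast
qed


interpretation of_real_poly_hom: map_poly_comm_ring_hom "of_real :: real \<Rightarrow> complex" ..

theorem mainTheorem6:
  fixes n m :: nat and H B :: "complex mat"
  assumes "m \<ge> 1"
    and "H \<in> Omega n" and "invertible_mat H" and "hermitian_mat H"
    and "B \<in> Omega n" and "H_selfadjoint H B"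
    and "spectrum_mat B \<subseteq> complex_of_real ` {0<..}"
  shows "\<exists>A \<in> Omega n. H_selfadjoint H A \<and> A ^\<^sub>m m = B"
proof -
  define N where "N = n + n"
  have Bc: "B \<in> carrier_mat N N" and BK: "Kmat n * map_mat cnj B = B * Kmat n"
    using Omega_K[OF assms(5)] unfolding N_def by auto
  have Hc: "H \<in> carrier_mat N N" using Omega_K[OF assms(2)] unfolding N_def by auto
  obtain as where cp: "char_poly B = (\<Prod>a\<leftarrow>as. [:- a, 1:])"
    using char_poly_factorized[OF Bc] by blast
  obtain T P Q where sd: "schur_decomposition B as = (T,P,Q)" by (cases "schur_decomposition B as") auto
  from schur_decomposition[OF Bc cp sd]
  have sim: "similar_mat_wit B T P Q" and ut: "upper_triangular T" and dT: "diag_mat T = as" by auto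
  from sim have Tc: "T \<in> carrier_mat N N" and Pc: "P \<in> carrier_mat N N" and Qc: "Q \<in> carrier_mat N N"
    and PQ: "P * Q = 1\<^sub>m N" and QP: "Q * P = 1\<^sub>m N" and BPTQ: "B = P * T * Q"
    unfolding similar_mat_wit_def Let_def using Bc by auto
  have as_pos: "\<forall>a\<in>set as. a = complex_of_real (Re a) \<and> Re a > 0"
  proof
    fix a assume a: "a \<in> set as"
    have "poly (char_poly B) a = 0" unfolding cp poly_prod_list using a
      by (induction as) auto
    then have "eigenvalue B a" using eigenvalue_root_char_poly[OF Bc] by simp
    then have "a \<in> complex_of_real ` {0<..}" using assms(7) unfolding spectrum_mat_def by auto
    then show "a = complex_of_real (Re a) \<and> Re a > 0" by auto
  qed
  define rs where "rs = map Re as"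
  have as_rs: "as = map complex_of_real rs" unfolding rs_def using as_pos
    by (induction as) auto
  have rs_pos: "\<forall>r\<in>set rs. r > 0" unfolding rs_def using as_pos by auto
  obtain p where p: "(\<Prod>d\<leftarrow>rs. [:-d,1:]) dvd p ^ m - [:0,1:]"
    using real_root_poly[OF rs_pos assms(1)] by blast
  then obtain h where h: "p ^ m - [:0,1:] = (\<Prod>d\<leftarrow>rs. [:-d,1:]) * h" by (auto elim: dvdE)
  define pc where "pc = map_poly complex_of_real p"
  define hc where "hc = map_poly complex_of_real h"
  have qc: "map_poly complex_of_real (\<Prod>d\<leftarrow>rs. [:-d,1:]) = (\<Prod>a\<leftarrow>as. [:-a,1:])"
    unfolding as_rs
  proof (induction rs)
    case Nil show ?case by simp
  next
    case (Cons r rs)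
    have "map_poly complex_of_real [:-r,1:] = [:-complex_of_real r,1:]" by simp
    then show ?case using Cons by (simp only: list.map prod_list.Cons of_real_poly_hom.hom_mult)
  qed
  have "map_poly complex_of_real (p ^ m - [:0,1:]) = pc ^ m - [:0,1:]"
    unfolding pc_def by (simp add: of_real_poly_hom.hom_minus of_real_poly_hom.hom_power)
  then have hc: "pc ^ m - [:0,1:] = (\<Prod>a\<leftarrow>as. [:-a,1:]) * hc"
    unfolding h hc_def of_real_poly_hom.hom_mult qc by simp
  define qq where "qq = (\<Prod>a\<leftarrow>as. [:-a,1:])"
  have BP: "P * T = B * P"
  proof -
    have "B * P = (P * T) * Q * P" unfolding BPTQ ..
    also have "\<dots> = (P * T) * (Q * P)" by (rule assoc_mult_mat) (use Pc Tc Qc in auto)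
    also have "\<dots> = P * T" unfolding QP using Pc Tc by simp
    finally show ?thesis by simp
  qed
  have int: "P * meval N qq T = meval N qq B * P" by (rule meval_intertwine[OF Pc Tc Bc BP])
  have T0: "meval N qq T = 0\<^sub>m N N" unfolding qq_def dT[symmetric] by (rule tri_annih[OF Tc ut])
  have "meval N qq B = meval N qq B * (P * Q)" unfolding PQ using Bc by simp
  also have "\<dots> = (meval N qq B * P) * Q" by (rule assoc_mult_mat[symmetric]) (use Bc Pc Qc in auto)
  also have "\<dots> = 0\<^sub>m N N" unfolding int[symmetric] T0 using Pc Qc by simp
  finally have q0: "meval N qq B = 0\<^sub>m N N" .
  have "meval N (pc ^ m) B = meval N ((pc ^ m - [:0,1:]) + [:0,1:]) B" by simp
  also have "\<dots> = meval N qq B * meval N hc B + B"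
    unfolding meval_add[OF Bc] hc qq_def[symmetric] meval_mult[OF Bc] meval_X[OF Bc] ..
  also have "\<dots> = B" unfolding q0 using Bc by simp
  finally have powB: "meval N (pc ^ m) B = B" .
  define A where "A = meval N pc B"
  have Ac: "A \<in> carrier_mat N N" unfolding A_def using Bc by simp
  have Apow: "A ^\<^sub>m m = B" unfolding A_def using powB meval_power[OF Bc] by simp
  have real_coeff: "\<forall>i. cnj (coeff pc i) = coeff pc i" unfolding pc_def by simp
  have cBc: "map_mat cnj B \<in> carrier_mat N N" using Bc by simp
  have cA: "map_mat cnj A = meval N pc (map_mat cnj B)"
    unfolding A_def using meval_cnj[OF Bc] real_coeff by blast
  have Kc: "Kmat n \<in> carrier_mat N N" unfolding N_def by (rule Kmat_carrier)
  have "Kmat n * map_mat cnj A = A * Kmat n"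
    unfolding cA unfolding A_def by (rule meval_intertwine[OF Kc cBc Bc BK])
  then have AO: "A \<in> Omega n" using K_Omega Ac unfolding N_def by blast
  have adjB: "mat_adjoint B = transpose_mat (map_mat cnj B)" by (rule adjoint_transpose[OF Bc])
  have adjBc: "mat_adjoint B \<in> carrier_mat N N" unfolding adjB using Bc by simp
  have adjA: "mat_adjoint A = meval N pc (mat_adjoint B)"
    unfolding adjoint_transpose[OF Ac] cA adjB by (rule meval_transpose[OF cBc])
  have HB: "H * B = mat_adjoint B * H" using assms(6) unfolding H_selfadjoint_def .
  have "H * A = mat_adjoint A * H"
    unfolding adjA unfolding A_def by (rule meval_intertwine[OF Hc Bc adjBc HB])
  then have "H_selfadjoint H A" unfolding H_selfadjoint_def .
  with AO Apow show ?thesis by blast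
qed

end
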